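(* Consider the decoupled prover-verifier game described in the context, viewed as a verifier-leading Stackelberg game in which the verifier has utility $R_V$ and the pair of translators $(\tau,\tau')$ has utility $R_T$. Then: (i) if $(v^*,\tau^*,\tau'^* )$ is a verifier-leading Stackelberg equilibrium, then $\tau^*$ is faithful to $s$, i.e. $\mathbb{1}_{\text{faithful}}(s(x),\tau^*(s(x)))=1$ for all $x\in\mathcal X$, and the pair $(v^*,\tau^* )$ satisfies completeness and soundness; (ii) conversely, if $\tau^*$ is faithful to $s$ and $(v^*,\tau^* )$ satisfies completeness and soundness, then there exists a sneaky translator $\tau'^*$ such that $(v^*,\tau^*,\tau'^* )$ is a verifier-leading Stackelberg equilibrium. In short, being an equilibrium is necessary and sufficient for faithfulness of $\tau^*$ with respect to $s$ together with completeness and soundness of $(v^*,\tau^* )$.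
   Context: Let $\mathcal X$ be a set of problems, $\mathcal Y$ a set of answers, and $\mathcal Z$ a set of solutions, each solution containing reasoning and a final answer. Each problem $x$ has a ground-truth answer $y(x)\in\mathcal Y$. Problems are drawn from a distribution $P_X$ on $\mathcal X$ that gives positive probability to every $x\in\mathcal X$, so that expectations over $P_X$ detect every problem. Assume that for every $x$ there exist solutions in $\mathcal Z$ whose final answer differs from $y(x)$. For $x\in\mathcal X$ and $z\in\mathcal Z$, let $\mathbb{1}_{\text{correct}}(x,z)\in\{0,1\}$ equal $1$ exactly when the final answer of $z$ equals $y(x)$. For $z_1,z_2\in\mathcal Z$, let $\mathbb{1}_{\text{faithful}}(z_1,z_2)\in\{0,1\}$ equal $1$ exactly when the final answers of $z_1$ and $z_2$ coincide. A fixed solver $s:\mathcal X\to\mathcal Z$ is given; write $s=s(x)$ and $y=y(x)$. The players are: - a faithful translator $\tau$, mapping the solver output $s(x)$ (with $x$ implicit) to a solution $\tau(s)\in\mathcal Z$; - a sneaky translator $\tau'$, mapping $(s(x),y(x))$ to a solution $\tau'(s,y)\in\mathcal Z$; - a verifier $v:\mathcal X\times\mathcal Z\to[0,1]$. Let $l:[0,1]\times\{0,1\}\to\mathbb R$ be a loss function that, for each $c\in\{0,1\}$, is minimized in its first argument if and only if $v=c$, normalized so that $l(c,c)=0$ (for example, cross-entropy). Let $r:[0,1]\times\{0,1\}\to\mathbb R$ be a reward function such that: - $r(v_1,1)>r(v_2,0)$ for all $v_1,v_2\in[0,1]$; - $r(v_1,1)>r(v_2,1)$ whenever $v_1>v_2$.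 The verifier's utility is $$R_V=-\tfrac12\,\mathbb E_{x\sim P_X}\Big[l\big(v(x,\tau(s)),\mathbb{1}_{\text{correct}}(x,\tau(s))\big)+l\big(v(x,\tau'(s,y)),\mathbb{1}_{\text{correct}}(x,\tau'(s,y))\big)\Big].$$ The translators' utility is $$R_T=\tfrac12\,\mathbb E_{x\sim P_X}\Big[r\big(v(x,\tau(s)),\mathbb{1}_{\text{faithful}}(s,\tau(s))\big)+r\big(v(x,\tau'(s,y)),1-\mathbb{1}_{\text{correct}}(x,\tau'(s,y))\big)\Big].$$ A verifier-leading Stackelberg equilibrium is a triple $(v^*,\tau^*,\tau'^* )$ such that: - $(\tau^*,\tau'^* )$ maximizes $R_T$ given $v^*$; - $v^*$ maximizes $R_V$ under the assumption that the translators best-respond to it. The pair $(v,\tau)$ satisfies: - completeness if for all $x\in\mathcal X$, $\mathbb{1}_{\text{correct}}(x,\tau(s(x)))=1$ implies $v(x,\tau(s(x)))=1$; - soundness if for all $x\in\mathcal X$ and all $z'\in\mathcal Z$, $\mathbb{1}_{\text{correct}}(x,z')=0$ implies $v(x,z')=0$. *)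

theory Defs
  imports "HOL-Probability.Probability"
begin

definition expect :: "'a pmf \<Rightarrow> ('a \<Rightarrow> real) \<Rightarrow> ereal" where
  "expect P f =
     enn2ereal (\<integral>\<^sup>+ x. ennreal (f x) \<partial>measure_pmf P)
   - enn2ereal (\<integral>\<^sup>+ x. ennreal (- f x) \<partial>measure_pmf P)"

text \<open>ans z is the final answer of solution z; yv x the ground-truth answer.\<close>
definition correct :: "('z \<Rightarrow> 'y) \<Rightarrow> ('x \<Rightarrow> 'y) \<Rightarrow> 'x \<Rightarrow> 'z \<Rightarrow> bool" where
  "correct ans yv x z \<longleftrightarrow> ans z = yv x"

definition faithful :: "('z \<Rightarrow> 'y) \<Rightarrow> 'z \<Rightarrow> 'z \<Rightarrow> bool" where
  "faithful ans z1 z2 \<longleftrightarrow> ans z1 = ans z2"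

text \<open>Verifier utility. tau x (s x) is the faithful translator's output, tau' x (s x) (yv x)
  the sneaky translator's output (the problem x is implicitly available).\<close>
definition RV :: "'x pmf \<Rightarrow> (real \<Rightarrow> real \<Rightarrow> real) \<Rightarrow> ('z \<Rightarrow> 'y) \<Rightarrow> ('x \<Rightarrow> 'y) \<Rightarrow> ('x \<Rightarrow> 'z)
    \<Rightarrow> ('x \<Rightarrow> 'z \<Rightarrow> real) \<Rightarrow> ('x \<Rightarrow> 'z \<Rightarrow> 'z) \<Rightarrow> ('x \<Rightarrow> 'z \<Rightarrow> 'y \<Rightarrow> 'z) \<Rightarrow> ereal" where
  "RV P l ans yv s v tau tau' =
     - ereal (1/2) * expect P (\<lambda>x.
         l (v x (tau x (s x))) (of_bool (correct ans yv x (tau x (s x))))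
       + l (v x (tau' x (s x) (yv x))) (of_bool (correct ans yv x (tau' x (s x) (yv x)))))"

definition RT :: "'x pmf \<Rightarrow> (real \<Rightarrow> real \<Rightarrow> real) \<Rightarrow> ('z \<Rightarrow> 'y) \<Rightarrow> ('x \<Rightarrow> 'y) \<Rightarrow> ('x \<Rightarrow> 'z)
    \<Rightarrow> ('x \<Rightarrow> 'z \<Rightarrow> real) \<Rightarrow> ('x \<Rightarrow> 'z \<Rightarrow> 'z) \<Rightarrow> ('x \<Rightarrow> 'z \<Rightarrow> 'y \<Rightarrow> 'z) \<Rightarrow> ereal" where
  "RT P r ans yv s v tau tau' =
     ereal (1/2) * expect P (\<lambda>x.
         r (v x (tau x (s x))) (of_bool (faithful ans (s x) (tau x (s x))))
       + r (v x (tau' x (s x) (yv x))) (1 - of_bool (correct ans yv x (tau' x (s x) (yv x)))))"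

definition verifier :: "('x \<Rightarrow> 'z \<Rightarrow> real) \<Rightarrow> bool" where
  "verifier v \<longleftrightarrow> (\<forall>x z. v x z \<in> {0..1})"

definition best_response where
  "best_response P r ans yv s v tau tau' \<longleftrightarrow>
     (\<forall>\<sigma> \<sigma>'. RT P r ans yv s v \<sigma> \<sigma>' \<le> RT P r ans yv s v tau tau')"

definition stackelberg_eq where
  "stackelberg_eq P l r ans yv s v tau tau' \<longleftrightarrow>
     verifier v \<and> best_response P r ans yv s v tau tau' \<and>
     (\<forall>w \<sigma> \<sigma>'. verifier w \<and> best_response P r ans yv s w \<sigma> \<sigma>' \<longrightarrow>
        RV P l ans yv s w \<sigma> \<sigma>' \<le> RV P l ans yv s v tau tau')"

definition faithful_to where
  "faithful_to ans s tau \<longleftrightarrow> (\<forall>x. faithful ans (s x) (tau x (s x)))"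

definition completeness where
  "completeness ans yv s v tau \<longleftrightarrow>
     (\<forall>x. correct ans yv x (tau x (s x)) \<longrightarrow> v x (tau x (s x)) = 1)"

definition soundness where
  "soundness ans yv v \<longleftrightarrow> (\<forall>x z'. \<not> correct ans yv x z' \<longrightarrow> v x z' = 0)"

end

theory Submission
  imports Defs
begin

lemma expect_nonneg:
  assumes "\<And>x. f x \<ge> 0"
  shows "expect P f = enn2ereal (\<integral>\<^sup>+x. ennreal (f x) \<partial>measure_pmf P)"
proof -
  have "(\<integral>\<^sup>+x. ennreal (- f x) \<partial>measure_pmf P) = 0"
    using assms by (simp add: ennreal_neg)
  then show ?thesis unfolding expect_def by (simp add: zero_ennreal.rep_eq)
qed

lemma expect_mono:
  assumes "\<And>x. f x \<le> g x"
  shows "expect P f \<le> expect P g"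
  unfolding expect_def
proof (rule ereal_minus_mono)
  show "enn2ereal (\<integral>\<^sup>+ x. ennreal (f x) \<partial>measure_pmf P) \<le> enn2ereal (\<integral>\<^sup>+ x. ennreal (g x) \<partial>measure_pmf P)"
    using assms by (auto simp: less_eq_ennreal.rep_eq[symmetric] intro!: nn_integral_mono ennreal_leI)
  show "enn2ereal (\<integral>\<^sup>+ x. ennreal (- g x) \<partial>measure_pmf P) \<le> enn2ereal (\<integral>\<^sup>+ x. ennreal (- f x) \<partial>measure_pmf P)"
    using assms by (auto simp: less_eq_ennreal.rep_eq[symmetric] intro!: nn_integral_mono ennreal_leI)
qed

lemma expect_bdd:
  assumes "\<And>x. f x \<le> C"
  shows "expect P f = (if integrable (measure_pmf P) f then ereal (\<integral>x. f x \<partial>measure_pmf P) else -\<infinity>)"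
proof -
  have "(\<integral>\<^sup>+x. ennreal (f x) \<partial>measure_pmf P) \<le> ennreal C"
    by (rule order_trans[OF nn_integral_mono[where v="\<lambda>_. ennreal C"]]) (auto intro: ennreal_leI assms)
  then have fin: "(\<integral>\<^sup>+x. ennreal (f x) \<partial>measure_pmf P) \<noteq> \<infinity>"
    using le_less_trans[OF _ ennreal_less_top] by (metis infinity_ennreal_def less_irrefl)
  have e: "enn2ereal a = ereal (enn2real a)" if "a \<noteq> \<infinity>" for a :: ennreal
  proof -
    have "enn2ereal a \<noteq> \<infinity>" using that by (simp add: infinity_ennreal_def)
    then have "\<bar>enn2ereal a\<bar> \<noteq> \<infinity>" using enn2ereal_nonneg[of a] by (cases "enn2ereal a") auto
    from ereal_real'[OF this] show ?thesis by simp
  qed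
  show ?thesis
  proof (cases "integrable (measure_pmf P) f")
    case True
    then have fin2: "(\<integral>\<^sup>+x. ennreal (- f x) \<partial>measure_pmf P) \<noteq> \<infinity>"
      by (simp add: real_integrable_def)
    show ?thesis unfolding expect_def real_lebesgue_integral_def[OF True]
      using True e[OF fin] e[OF fin2] by simp
  next
    case False
    then have "(\<integral>\<^sup>+x. ennreal (- f x) \<partial>measure_pmf P) = \<infinity>"
      using fin by (simp add: real_integrable_def)
    then show ?thesis using False e[OF fin] unfolding expect_def by (simp add: infinity_ennreal_def)
  qed
qed

lemma meas_pmf: "(f :: 'a \<Rightarrow> 'b::topological_space) \<in> borel_measurable (measure_pmf P)"
  by (simp add: measurable_def)

lemma expect_const: "expect P (\<lambda>x. c) = ereal c"
  by (subst expect_bdd[where C=c]) auto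

lemma expect_improve:
  fixes f g :: "'a \<Rightarrow> real"
  assumes bdd: "\<And>x. f x \<le> C" "\<And>x. g x \<le> C"
    and fin: "expect P f \<noteq> -\<infinity>"
    and same: "\<And>x. x \<noteq> x0 \<Longrightarrow> g x = f x"
    and lt: "f x0 < g x0" and pos: "pmf P x0 > 0"
  shows "\<exists>a b. expect P f = ereal a \<and> expect P g = ereal b \<and> a < b"
proof -
  have intf: "integrable P f" using fin expect_bdd[OF bdd(1), of P] by (auto split: if_splits)
  define d where "d = g x0 - f x0"
  have geq: "g = (\<lambda>x. f x + d * indicator {x0} x)"
    using same unfolding d_def by (auto simp: indicator_def fun_eq_iff)
  have inti: "integrable P (\<lambda>x. d * indicator {x0} x)"
    by (intro integrable_mult_right integrable_real_indicator) (auto simp: emeasure_pmf_single)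
  have intg: "integrable P g" using Bochner_Integration.integrable_add[OF intf inti] geq by simp
  have "(\<integral>x. g x \<partial>P) = (\<integral>x. f x \<partial>P) + d * pmf P x0"
    by (subst geq, subst Bochner_Integration.integral_add[OF intf inti]) (simp add: measure_pmf_single)
  moreover have "d * pmf P x0 > 0" using lt pos by (simp add: d_def)
  ultimately show ?thesis
    using expect_bdd[OF bdd(1), of P] expect_bdd[OF bdd(2), of P] intf intg by auto
qed

lemma RV_nonpos:
  assumes "\<And>x. F x \<ge> 0"
  shows "- ereal (1/2) * expect P F \<le> 0"
  using assms by (simp add: expect_nonneg ereal_mult_le_0_iff)

lemma RV_zero:
  assumes nn: "\<And>x. F x \<ge> 0" and ge: "0 \<le> - ereal (1/2) * expect P F"
    and pos: "\<forall>x. pmf P x > 0"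
  shows "F x = 0"
proof -
  have "enn2ereal (\<integral>\<^sup>+x. ennreal (F x) \<partial>measure_pmf P) \<le> 0"
  proof -
    have k: "\<And>X::ereal. 0 \<le> X \<Longrightarrow> 0 \<le> ereal (-(1/2)) * X \<Longrightarrow> X \<le> 0"
      subgoal for X by (cases X) (auto simp: zero_le_mult_iff)
      done
    show ?thesis using ge unfolding expect_nonneg[OF nn] by (intro k) auto
  qed
  then have "(\<integral>\<^sup>+x. ennreal (F x) \<partial>measure_pmf P) = 0"
    by (metis antisym enn2ereal_nonneg zero_ennreal.rep_eq ennreal.enn2ereal_inject)
  then have "AE y in measure_pmf P. ennreal (F y) = 0"
    by (simp add: nn_integral_0_iff_AE meas_pmf)
  then have "ennreal (F x) = 0"
    using pos by (auto simp: AE_measure_pmf_iff set_pmf_iff less_le)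
  then show ?thesis using nn[of x] by simp
qed

theorem theorem1:
  fixes P :: "'x pmf" and ans :: "'z \<Rightarrow> 'y" and yv :: "'x \<Rightarrow> 'y" and s :: "'x \<Rightarrow> 'z"
    and l r :: "real \<Rightarrow> real \<Rightarrow> real"
  assumes P_pos: "\<forall>x. pmf P x > 0"
    and wrong_exists: "\<forall>x. \<exists>z. ans z \<noteq> yv x"
    and l_min: "\<forall>c\<in>{0,1}. \<forall>u\<in>{0..1}. (\<forall>w\<in>{0..1}. l u c \<le> l w c) \<longleftrightarrow> u = c"
    and l_norm: "\<forall>c\<in>{0,1}. l c c = 0"
    and r_correct: "\<forall>v1\<in>{0..1}. \<forall>v2\<in>{0..1}. r v1 1 > r v2 0"
    and r_mono: "\<forall>v1\<in>{0..1}. \<forall>v2\<in>{0..1}. v1 > v2 \<longrightarrow> r v1 1 > r v2 1"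
  shows "(\<forall>v tau tau'. stackelberg_eq P l r ans yv s v tau tau' \<longrightarrow>
            faithful_to ans s tau \<and> completeness ans yv s v tau \<and> soundness ans yv v)
       \<and> (\<forall>v tau. verifier v \<and> faithful_to ans s tau \<and> completeness ans yv s v tau
                   \<and> soundness ans yv v \<longrightarrow>
            (\<exists>tau'. stackelberg_eq P l r ans yv s v tau tau'))"
proof -
  have r_le: "r u c \<le> r 1 1" if "u \<in> {0..1}" "c \<in> {0,1}" for u c
  proof (cases "c = 1")
    case True
    then show ?thesis using that r_mono by (cases "u = 1") (auto simp: less_imp_le)
  next
    case False
    then have "c = 0" using that by auto
    then show ?thesis using that r_correct by (auto simp: less_imp_le)
  qed
  have r_ge: "r 0 1 \<le> r u 1" if "u \<in> {0..1}" for u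
    using that r_mono by (cases "u = 0") (auto simp: less_imp_le)
  have r_lt: "r u 0 < r w 1" if "u \<in> {0..1}" "w \<in> {0..1}" for u w
    using that r_correct by auto
  have r_strict: "r u 1 < r w 1" if "u \<in> {0..1}" "w \<in> {0..1}" "u < w" for u w
    using that r_mono by auto
  have l_nn: "0 \<le> l u c" if "u \<in> {0..1}" "c \<in> {0,1}" for u c
  proof -
    have "c \<in> {0..1}" using that by auto
    then have "\<forall>w\<in>{0..1}. l c c \<le> l w c" using l_min that(2) by blast
    then show ?thesis using that l_norm by auto
  qed
  have l_eq: "u = c" if "u \<in> {0..1}" "c \<in> {0,1}" "l u c = 0" for u c
  proof -
    have "\<forall>w\<in>{0..1}. l u c \<le> l w c" using l_nn that by auto
    then show ?thesis using l_min that by blast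
  qed
  have ob: "(of_bool b :: real) \<in> {0..1}" "(of_bool b :: real) \<in> {0,1}"
    "(1 - of_bool b :: real) \<in> {0,1}" for b by auto
  define TT where "TT w \<sigma> \<sigma>' x =
         r (w x (\<sigma> x (s x))) (of_bool (faithful ans (s x) (\<sigma> x (s x))))
       + r (w x (\<sigma>' x (s x) (yv x))) (1 - of_bool (correct ans yv x (\<sigma>' x (s x) (yv x))))"
    for w :: "'x \<Rightarrow> 'z \<Rightarrow> real" and \<sigma> \<sigma>' x
  define LL where "LL w \<sigma> \<sigma>' x =
         l (w x (\<sigma> x (s x))) (of_bool (correct ans yv x (\<sigma> x (s x))))
       + l (w x (\<sigma>' x (s x) (yv x))) (of_bool (correct ans yv x (\<sigma>' x (s x) (yv x))))"
    for w :: "'x \<Rightarrow> 'z \<Rightarrow> real" and \<sigma> \<sigma>' x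
  have RT_eq: "RT P r ans yv s w \<sigma> \<sigma>' = ereal (1/2) * expect P (TT w \<sigma> \<sigma>')" for w \<sigma> \<sigma>'
    unfolding RT_def TT_def by simp
  have RV_eq: "RV P l ans yv s w \<sigma> \<sigma>' = - ereal (1/2) * expect P (LL w \<sigma> \<sigma>')" for w \<sigma> \<sigma>'
    unfolding RV_def LL_def by simp
  have TT_bdd: "TT w \<sigma> \<sigma>' x \<le> 2 * r 1 1" if "verifier w" for w \<sigma> \<sigma>' x
  proof -
    have "w x z \<in> {0..1}" for z using that by (simp add: verifier_def)
    then show ?thesis unfolding TT_def using r_le ob by (smt (verit))
  qed
  have LL_nn: "0 \<le> LL w \<sigma> \<sigma>' x" if "verifier w" for w \<sigma> \<sigma>' x
  proof -
    have "w x z \<in> {0..1}" for z using that by (simp add: verifier_def)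
    then show ?thesis unfolding LL_def using l_nn ob by (smt (verit))
  qed
  define wr where "wr x = (SOME z. ans z \<noteq> yv x)" for x
  have wr: "ans (wr x) \<noteq> yv x" for x
    unfolding wr_def using wrong_exists by (metis (mono_tags, lifting) someI_ex)
  define id1 where "id1 = (\<lambda>(x::'x) (z::'z). z)"
  define wr1 where "wr1 = (\<lambda>x (z::'z) (y::'y). wr x)"
  have fin: "expect P (TT w \<tau> \<tau>') \<noteq> -\<infinity>"
    if vw: "verifier w" and br: "best_response P r ans yv s w \<tau> \<tau>'" for w \<tau> \<tau>'
  proof
    assume inf: "expect P (TT w \<tau> \<tau>') = -\<infinity>"
    have "TT w id1 wr1 x \<ge> 2 * r 0 1" for x
    proof -
      have "w x z \<in> {0..1}" for z using vw by (simp add: verifier_def)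
      then show ?thesis unfolding TT_def id1_def wr1_def
        using r_ge wr[of x] by (simp add: faithful_def correct_def) (smt (verit))
    qed
    then have "expect P (\<lambda>x. 2 * r 0 1) \<le> expect P (TT w id1 wr1)"
      by (intro expect_mono) auto
    then have "ereal (1/2) * ereal (2 * r 0 1) \<le> ereal (1/2) * expect P (TT w id1 wr1)"
      by (intro ereal_mult_left_mono) (auto simp: expect_const)
    also have "\<dots> \<le> ereal (1/2) * expect P (TT w \<tau> \<tau>')"
      using br unfolding best_response_def RT_eq by blast
    finally show False using inf by simp
  qed
  have strict: "False"
    if vw: "verifier w" and br: "best_response P r ans yv s w \<tau> \<tau>'"
      and same: "\<And>x. x \<noteq> xq \<Longrightarrow> TT w \<sigma> \<sigma>' x = TT w \<tau> \<tau>' x"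
      and lt: "TT w \<tau> \<tau>' xq < TT w \<sigma> \<sigma>' xq" for w \<tau> \<tau>' \<sigma> \<sigma>' xq
  proof -
    obtain a b where ab: "expect P (TT w \<tau> \<tau>') = ereal a" "expect P (TT w \<sigma> \<sigma>') = ereal b" "a < b"
      using expect_improve[of "TT w \<tau> \<tau>'" "2 * r 1 1" "TT w \<sigma> \<sigma>'" P xq]
        TT_bdd[OF vw] fin[OF vw br] same lt P_pos by blast
    have "RT P r ans yv s w \<sigma> \<sigma>' \<le> RT P r ans yv s w \<tau> \<tau>'"
      using br unfolding best_response_def by blast
    then show False using ab unfolding RT_eq by simp
  qed
  have part1: "faithful_to ans s tau \<and> completeness ans yv s v tau \<and> soundness ans yv v"
    if eq: "stackelberg_eq P l r ans yv s v tau tau'" for v tau tau'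
  proof -
    from eq have vv: "verifier v" and br: "best_response P r ans yv s v tau tau'"
      and opt: "\<And>w \<sigma> \<sigma>'. verifier w \<Longrightarrow> best_response P r ans yv s w \<sigma> \<sigma>' \<Longrightarrow>
                 RV P l ans yv s w \<sigma> \<sigma>' \<le> RV P l ans yv s v tau tau'"
      unfolding stackelberg_eq_def by auto
    have v01: "v x z \<in> {0..1}" for x z using vv by (simp add: verifier_def)
    define w0 where "w0 = (\<lambda>x z. of_bool (correct ans yv x z) :: real)"
    have vw0: "verifier w0" by (simp add: w0_def verifier_def)
    have pw: "TT w0 \<sigma> \<sigma>' x \<le> TT w0 id1 wr1 x" for \<sigma> \<sigma>' x
    proof -
      have a: "r (w0 x (\<sigma> x (s x))) (of_bool (faithful ans (s x) (\<sigma> x (s x)))) \<le> r (w0 x (s x)) 1"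
      proof (cases "faithful ans (s x) (\<sigma> x (s x))")
        case True
        then show ?thesis by (simp add: w0_def correct_def faithful_def)
      next
        case False
        then show ?thesis using r_lt[OF ob(1) ob(1)] by (simp add: w0_def less_imp_le)
      qed
      have b: "r (w0 x (\<sigma>' x (s x) (yv x))) (1 - of_bool (correct ans yv x (\<sigma>' x (s x) (yv x)))) \<le> r 0 1"
        using r_lt[of 1 0] by (cases "correct ans yv x (\<sigma>' x (s x) (yv x))") (auto simp: w0_def)
      have c: "TT w0 id1 wr1 x = r (w0 x (s x)) 1 + r 0 1"
        using wr[of x] by (simp add: TT_def id1_def wr1_def w0_def faithful_def correct_def)
      show ?thesis using a b c unfolding TT_def by linarith
    qed
    have br0: "best_response P r ans yv s w0 id1 wr1"
      unfolding best_response_def RT_eq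
      by (intro allI ereal_mult_left_mono expect_mono pw) simp
    have "LL w0 id1 wr1 x = 0" for x
      using l_norm by (simp add: LL_def w0_def)
    then have "LL w0 id1 wr1 = (\<lambda>x. 0)" by (rule ext)
    then have "RV P l ans yv s w0 id1 wr1 = 0"
      unfolding RV_eq by (simp add: expect_const zero_ereal_def)
    then have "0 \<le> - ereal (1/2) * expect P (LL v tau tau')"
      using opt[OF vw0 br0] unfolding RV_eq by simp
    then have LL0: "LL v tau tau' x = 0" for x
      using RV_zero[where F="LL v tau tau'", OF LL_nn[OF vv] _ P_pos] by blast
    have vt: "v x (tau x (s x)) = of_bool (correct ans yv x (tau x (s x)))" for x
    proof -
      have "l (v x (tau x (s x))) (of_bool (correct ans yv x (tau x (s x)))) = 0"
        using LL0[of x] l_nn[OF v01 ob(2)] l_nn[OF v01 ob(2)] unfolding LL_def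
        by (smt (verit))
      then show ?thesis using l_eq[OF v01 ob(2)] by blast
    qed
    have vt': "v x (tau' x (s x) (yv x)) = of_bool (correct ans yv x (tau' x (s x) (yv x)))" for x
    proof -
      have "l (v x (tau' x (s x) (yv x))) (of_bool (correct ans yv x (tau' x (s x) (yv x)))) = 0"
        using LL0[of x] l_nn[OF v01 ob(2)] l_nn[OF v01 ob(2)] unfolding LL_def
        by (smt (verit))
      then show ?thesis using l_eq[OF v01 ob(2)] by blast
    qed
    have cp: "completeness ans yv s v tau"
      unfolding completeness_def using vt by simp
    have ft: "faithful_to ans s tau"
      unfolding faithful_to_def
    proof (rule ccontr)
      assume "\<not> (\<forall>x. faithful ans (s x) (tau x (s x)))"
      then obtain x0 where nf: "\<not> faithful ans (s x0) (tau x0 (s x0))" by blast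
      define \<sigma> where "\<sigma> = (\<lambda>x. if x = x0 then (\<lambda>z::'z. s x0) else tau x)"
      show False
      proof (rule strict[OF vv br, where \<sigma>=\<sigma> and \<sigma>'=tau' and xq=x0])
        show "TT v \<sigma> tau' x = TT v tau tau' x" if "x \<noteq> x0" for x
          using that by (simp add: TT_def \<sigma>_def)
        show "TT v tau tau' x0 < TT v \<sigma> tau' x0"
          using nf r_lt[OF v01 v01, of x0 "tau x0 (s x0)" x0 "s x0"]
          by (simp add: TT_def \<sigma>_def faithful_def)
      qed
    qed
    have sd: "soundness ans yv v"
      unfolding soundness_def
    proof (intro allI impI)
      fix x0 z'
      assume nc: "\<not> correct ans yv x0 z'"
      show "v x0 z' = 0"
      proof (rule ccontr)
        assume nz: "v x0 z' \<noteq> 0"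
        then have pz: "0 < v x0 z'" using v01[of x0 z'] by auto
        define \<sigma>' where "\<sigma>' = (\<lambda>x. if x = x0 then (\<lambda>(z::'z) (y::'y). z') else tau' x)"
        show False
        proof (rule strict[OF vv br, where \<sigma>=tau and \<sigma>'=\<sigma>' and xq=x0])
          show "TT v tau \<sigma>' x = TT v tau tau' x" if "x \<noteq> x0" for x
            using that by (simp add: TT_def \<sigma>'_def)
          have "r (v x0 (tau' x0 (s x0) (yv x0))) (1 - of_bool (correct ans yv x0 (tau' x0 (s x0) (yv x0))))
                < r (v x0 z') 1"
          proof (cases "correct ans yv x0 (tau' x0 (s x0) (yv x0))")
            case True
            then show ?thesis using vt'[of x0] r_lt[of 1 "v x0 z'"] v01 by simp
          next
            case False
            then show ?thesis using vt'[of x0] r_strict[of 0 "v x0 z'"] v01 pz by simp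
          qed
          then show "TT v tau tau' x0 < TT v tau \<sigma>' x0"
            using nc by (simp add: TT_def \<sigma>'_def)
        qed
      qed
    qed
    show ?thesis using ft cp sd by blast
  qed
  have part2: "\<exists>tau'. stackelberg_eq P l r ans yv s v tau tau'"
    if vv: "verifier v" and ft: "faithful_to ans s tau" and cp: "completeness ans yv s v tau"
      and sd: "soundness ans yv v" for v tau
  proof -
    have v01: "v x z \<in> {0..1}" for x z using vv by (simp add: verifier_def)
    have vt: "v x (tau x (s x)) = of_bool (correct ans yv x (tau x (s x)))" for x
      using cp sd unfolding completeness_def soundness_def by (cases "correct ans yv x (tau x (s x))") auto
    have vw: "v x (wr x) = 0" for x using sd wr[of x] by (simp add: soundness_def correct_def)
    have pw: "TT v \<sigma> \<sigma>' x \<le> TT v tau wr1 x" for \<sigma> \<sigma>' x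
    proof -
      have fx: "ans (tau x (s x)) = ans (s x)" using ft by (simp add: faithful_to_def faithful_def)
      have a: "r (v x (\<sigma> x (s x))) (of_bool (faithful ans (s x) (\<sigma> x (s x)))) \<le> r (v x (tau x (s x))) 1"
      proof (cases "faithful ans (s x) (\<sigma> x (s x))")
        case True
        then have eqc: "correct ans yv x (\<sigma> x (s x)) = correct ans yv x (tau x (s x))"
          using fx by (simp add: faithful_def correct_def)
        show ?thesis
        proof (cases "correct ans yv x (tau x (s x))")
          case True
          then show ?thesis using vt[of x] r_le[OF v01 ob(2)] by simp
        next
          case False
          then show ?thesis using vt[of x] eqc sd True by (simp add: soundness_def faithful_def)
        qed
      next
        case False
        then show ?thesis using r_lt[OF v01 v01, of x "\<sigma> x (s x)" x "tau x (s x)"]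
          by (simp add: less_imp_le)
      qed
      have b: "r (v x (\<sigma>' x (s x) (yv x))) (1 - of_bool (correct ans yv x (\<sigma>' x (s x) (yv x)))) \<le> r 0 1"
        using r_lt[of "v x (\<sigma>' x (s x) (yv x))" 0] v01[of x "\<sigma>' x (s x) (yv x)"] sd
        by (cases "correct ans yv x (\<sigma>' x (s x) (yv x))") (auto simp: soundness_def)
      have c: "TT v tau wr1 x = r (v x (tau x (s x))) 1 + r 0 1"
        using wr[of x] vw[of x] ft by (simp add: TT_def wr1_def faithful_to_def correct_def)
      show ?thesis using a b c unfolding TT_def by linarith
    qed
    have br: "best_response P r ans yv s v tau wr1"
      unfolding best_response_def RT_eq
      by (intro allI ereal_mult_left_mono expect_mono pw) simp
    have "LL v tau wr1 x = 0" for x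
      using l_norm vt[of x] vw[of x] wr[of x] by (simp add: LL_def wr1_def correct_def)
    then have "LL v tau wr1 = (\<lambda>x. 0)" by (rule ext)
    then have RV0: "RV P l ans yv s v tau wr1 = 0"
      unfolding RV_eq by (simp add: expect_const zero_ereal_def)
    have "stackelberg_eq P l r ans yv s v tau wr1"
      unfolding stackelberg_eq_def
      using vv br RV0 RV_nonpos[OF LL_nn] unfolding RV_eq by auto
    then show ?thesis by blast
  qed
  show ?thesis using part1 part2 by blast
qed

end
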